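(* Let $n\ge1$, let $\mathcal{T}$ be the completed tensor algebra on the $\mathbb{Q}$-vector space $H$ with basis $x_1,\dots,x_n$, let $x_0=-\sum_{k=1}^nx_k$, and let $\star$ be the operation on $\mathcal{T}_{\ge1}$ described in the context. Let $\Xi=x_1*x_2*\cdots*x_n=\log(e^{x_1}e^{x_2}\cdots e^{x_n})\in\mathcal{T}_{\ge1}$, and let $(-\Xi)^{-1}$ denote the inverse of $-\Xi$ with respect to $\star$. Then $$(-\Xi)^{-1}+x_0\,s(\Xi)\,x_0=x_0-\sum_{k>l}x_kx_l+\sum_{k=1}^n s(x_k)x_k^2=-\sum_{k>l}x_kx_l+\sum_{k=1}^n\frac{x_k^2}{e^{-x_k}-1},$$ where $s(z)=\frac{1}{e^{-z}-1}+\frac1z$ is substituted as a power series, products being those of $\mathcal{T}$.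
   Context: $\mathcal{T}=\prod_{m\ge0}H^{\otimes m}$ with filtration $\mathcal{T}_{\ge p}=\prod_{m\ge p}H^{\otimes m}$; products in $\mathcal{T}$ are written by juxtaposition. The continuous bilinear operation $\star:\mathcal{T}_{\ge1}\times\mathcal{T}_{\ge1}\to\mathcal{T}_{\ge1}$ is defined by $x_{i_1}\cdots x_{i_{l-1}}x_{i_l}\star x_{j_1}x_{j_2}\cdots x_{j_m}=-\delta_{i_lj_1}\,x_{i_1}\cdots x_{i_{l-1}}x_{j_1}x_{j_2}\cdots x_{j_m}$ for $l,m\ge1$, $1\le i_a,j_b\le n$. It is associative with unit $x_0$, and every $Z\in x_0+\mathcal{T}_{\ge2}$ has a unique inverse $Z^{-1}$ with $Z\star Z^{-1}=Z^{-1}\star Z=x_0$; note $-\Xi\in x_0+\mathcal{T}_{\ge2}$. $s(z)=\frac{1}{e^{-z}-1}+\frac1z=-\frac12-\frac1{12}z+\frac1{720}z^3-\cdots$. *)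

theory Defs
  imports Main "HOL-Library.Function_Algebras" "HOL-Computational_Algebra.Formal_Laurent_Series"
begin

text \<open>Elements of the completed tensor algebra on H = Q-span of x_1..x_n are represented
 by their coefficient functions on words (lists of letters); the letter k stands for x_k.
 Addition, negation, subtraction and finite sums are pointwise (Function_Algebras).\<close>

type_synonym tser = "nat list \<Rightarrow> rat"

definition in_T :: "nat \<Rightarrow> tser \<Rightarrow> bool" where
  "in_T n a \<longleftrightarrow> (\<forall>w. \<not> set w \<subseteq> {1..n} \<longrightarrow> a w = 0)"

definition tone :: tser where
  "tone w = (if w = [] then 1 else 0)"

definition gen :: "nat \<Rightarrow> tser" where
  "gen k w = (if w = [k] then 1 else 0)"

definition tmul :: "tser \<Rightarrow> tser \<Rightarrow> tser" where
  "tmul a b w = (\<Sum>i\<le>length w. a (take i w) * b (drop i w))"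

fun tpow :: "tser \<Rightarrow> nat \<Rightarrow> tser" where
  "tpow a 0 = tone"
| "tpow a (Suc k) = tmul a (tpow a k)"

definition tsubst :: "(nat \<Rightarrow> rat) \<Rightarrow> tser \<Rightarrow> tser" where
  "tsubst c a w = (\<Sum>k\<le>length w. c k * tpow a k w)"

definition texp :: "tser \<Rightarrow> tser" where
  "texp a = tsubst (\<lambda>k. 1 / of_nat (fact k)) a"

definition tlog :: "tser \<Rightarrow> tser" where
  "tlog b = tsubst (\<lambda>k. if k = 0 then 0 else (-1) ^ (k + 1) / of_nat k) (b - tone)"

definition x0 :: "nat \<Rightarrow> tser" where
  "x0 n = - (\<Sum>k\<in>{1..n}. gen k)"

definition Xi :: "nat \<Rightarrow> tser" where
  "Xi n = tlog (foldr tmul (map (\<lambda>k. texp (gen k)) [1..<n+1]) tone)"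

text \<open>the operation star: (u x_i) star (x_j v) = - delta_{ij} u x_j v, extended bilinearly
 and continuously; only coefficients on nonempty words enter.\<close>
definition star :: "tser \<Rightarrow> tser \<Rightarrow> tser" where
  "star a b w = (\<Sum>i<length w. - a (take i w @ [w ! i]) * b (drop i w))"

definition star_inv :: "nat \<Rightarrow> tser \<Rightarrow> tser" where
  "star_inv n Y = (THE Z. in_T n Z \<and> Z [] = 0 \<and> star Z Y = x0 n \<and> star Y Z = x0 n)"

text \<open>coefficients of s(z) = 1/(e^{-z}-1) + 1/z as a formal (Laurent, in fact power) series\<close>
definition s_coeff :: "nat \<Rightarrow> rat" where
  "s_coeff k = fls_nth (inverse (fps_to_fls (fps_exp (-1) - 1)) + fls_X_inv) (int k)"

definition q_coeff :: "nat \<Rightarrow> rat" where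
  "q_coeff k = fls_nth (fls_X ^ 2 * inverse (fps_to_fls (fps_exp (-1) - 1))) (int k)"

end

theory Submission
  imports Defs
begin

lemma tsum_apply: "(\<Sum>k\<in>A. f k) w = (\<Sum>k\<in>A. f k w)"
  by (induction A rule: infinite_finite_induct) auto

definition tsc :: "rat \<Rightarrow> tser \<Rightarrow> tser" where
  "tsc c a = (\<lambda>w. c * a w)"

lemma tsc_apply[simp]: "tsc c a w = c * a w" by (simp add: tsc_def)

lemma tmul_Nil[simp]: "tmul a b [] = a [] * b []"
  by (simp add: tmul_def)

lemma tmul_Cons: "tmul a b (x#w) = a [] * b (x#w) + tmul (\<lambda>v. a (x#v)) b w"
  unfolding tmul_def by (simp del: sum.atMost_Suc add: sum.atMost_Suc_shift)

lemma tmul_snoc: "tmul a b (w@[x]) = tmul a (\<lambda>v. b (v@[x])) w + a (w@[x]) * b []"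
proof -
  have "tmul a b (w@[x]) = (\<Sum>i\<le>Suc (length w). a (take i (w@[x])) * b (drop i (w@[x])))"
    by (simp add: tmul_def)
  also have "\<dots> = (\<Sum>i\<le>length w. a (take i (w@[x])) * b (drop i (w@[x]))) + a (w@[x]) * b []"
    by (simp add: sum.atMost_Suc)
  also have "(\<Sum>i\<le>length w. a (take i (w@[x])) * b (drop i (w@[x]))) = 
     (\<Sum>i\<le>length w. a (take i w) * b (drop i w @ [x]))"
    by (rule sum.cong) auto
  finally show ?thesis by (simp add: tmul_def)
qed

lemma tmul_add_left: "tmul (a + b) c = tmul a c + tmul b c"
  by (rule ext) (simp add: tmul_def algebra_simps sum.distrib)
lemma tmul_add_right: "tmul a (b + c) = tmul a b + tmul a c"
  by (rule ext) (simp add: tmul_def algebra_simps sum.distrib)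
lemma tmul_diff_left: "tmul (a - b) c = tmul a c - tmul b c"
  by (rule ext) (simp add: tmul_def algebra_simps sum_subtractf)
lemma tmul_diff_right: "tmul a (b - c) = tmul a b - tmul a c"
  by (rule ext) (simp add: tmul_def algebra_simps sum_subtractf)
lemma tmul_uminus_left: "tmul (- a) c = - tmul a c"
  by (rule ext) (simp add: tmul_def sum_negf)
lemma tmul_uminus_right: "tmul a (- c) = - tmul a c"
  by (rule ext) (simp add: tmul_def sum_negf)
lemma tmul_zero_left[simp]: "tmul 0 c = 0" "tmul (\<lambda>_. 0) c = (\<lambda>_. 0)"
  by (rule ext, simp add: tmul_def)+
lemma tmul_zero_right[simp]: "tmul a 0 = 0" "tmul a (\<lambda>_. 0) = (\<lambda>_. 0)"
  by (rule ext, simp add: tmul_def)+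
lemma tmul_tsc_left: "tmul (tsc r a) c = tsc r (tmul a c)"
  by (rule ext) (simp add: tmul_def sum_distrib_left algebra_simps)
lemma tmul_tsc_right: "tmul a (tsc r c) = tsc r (tmul a c)"
  by (rule ext) (simp add: tmul_def sum_distrib_left algebra_simps)
lemma tmul_sum_left: "tmul (\<Sum>k\<in>A. f k) c = (\<Sum>k\<in>A. tmul (f k) c)"
  by (rule ext) (simp add: tmul_def tsum_apply sum_distrib_right sum_distrib_left sum.swap[of _ A])
lemma tmul_sum_right: "tmul c (\<Sum>k\<in>A. f k) = (\<Sum>k\<in>A. tmul c (f k))"
  by (rule ext) (simp add: tmul_def tsum_apply sum_distrib_right sum_distrib_left sum.swap[of _ A])

lemmas tmul_distribs = tmul_add_left tmul_add_right tmul_diff_left tmul_diff_right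
  tmul_uminus_left tmul_uminus_right tmul_tsc_left tmul_tsc_right tmul_sum_left tmul_sum_right

lemma tmul_Cons_fun: "(\<lambda>v. tmul a b (x#v)) = tsc (a []) (\<lambda>v. b (x#v)) + tmul (\<lambda>v. a (x#v)) b"
  by (rule ext) (simp add: tmul_Cons)

lemma tmul_assoc: "tmul (tmul a b) c = tmul a (tmul b c)"
proof (rule ext)
  fix w show "tmul (tmul a b) c w = tmul a (tmul b c) w"
  proof (induction w arbitrary: a)
    case Nil then show ?case by simp
  next
    case (Cons x w)
    have "tmul (tmul a b) c (x#w) = a [] * b [] * c (x#w) + tmul (\<lambda>v. tmul a b (x#v)) c w"
      by (simp add: tmul_Cons)
    also have "(\<lambda>v. tmul a b (x#v)) = tsc (a []) (\<lambda>v. b (x#v)) + tmul (\<lambda>v. a (x#v)) b"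
      by (rule tmul_Cons_fun)
    also have "tmul (tsc (a []) (\<lambda>v. b (x#v)) + tmul (\<lambda>v. a (x#v)) b) c w
       = a [] * tmul (\<lambda>v. b (x#v)) c w + tmul (\<lambda>v. a (x#v)) (tmul b c) w"
      by (simp only: tmul_add_left tmul_tsc_left Cons plus_fun_apply tsc_apply)
    finally show ?case by (simp add: tmul_Cons algebra_simps)
  qed
qed

lemma tone_Nil[simp]: "tone [] = 1" and tone_Cons[simp]: "tone (x#w) = 0"
  by (simp_all add: tone_def)

lemma tone_Cons_fun[simp]: "(\<lambda>v. tone (x#v)) = 0"
  by (rule ext) simp

lemma tmul_tone_left[simp]: "tmul tone a = a"
proof (rule ext)
  fix w show "tmul tone a w = a w"
    by (cases w) (simp_all add: tmul_Cons zero_fun_def)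
qed

lemma tmul_tone_right[simp]: "tmul a tone = a"
proof (rule ext)
  fix w show "tmul a tone w = a w"
    by (induction w arbitrary: a) (simp_all add: tmul_Cons)
qed

lemma tpow_Suc': "tpow a (Suc k) = tmul (tpow a k) a"
  by (induction k) (simp_all add: tmul_assoc[symmetric])

lemma tpow_add: "tpow a (k + m) = tmul (tpow a k) (tpow a m)"
  by (induction k) (simp_all add: tmul_assoc)

lemma tpow_vanish: "a [] = 0 \<Longrightarrow> length w < k \<Longrightarrow> tpow a k w = 0"
proof (induction k arbitrary: w)
  case 0 then show ?case by simp
next
  case (Suc k)
  show ?case
  proof (cases w)
    case Nil then show ?thesis using Suc by simp
  next
    case (Cons x v)
    have "tmul a (tpow a k) (x#v) = tmul (\<lambda>u. a (x#u)) (tpow a k) v"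
      using Suc by (simp add: tmul_Cons)
    also have "\<dots> = 0" unfolding tmul_def
      by (rule sum.neutral) (use Suc Cons in auto)
    finally show ?thesis using Cons by simp
  qed
qed

lemma tpow_Nil: "a [] = 0 \<Longrightarrow> tpow a k [] = (if k = 0 then 1 else 0)"
  by (cases k) simp_all

lemma tsubst_ext: assumes "a [] = 0" "length w \<le> N"
  shows "tsubst c a w = (\<Sum>k\<le>N. c k * tpow a k w)"
  unfolding tsubst_def
  by (rule sum.mono_neutral_left) (use assms tpow_vanish in auto)

lemma tmul_tsubst_right: assumes "a [] = 0" "length w \<le> N"
  shows "tmul u (tsubst c a) w = (\<Sum>k\<le>N. c k * tmul u (tpow a k) w)"
proof -
  have "tmul u (tsubst c a) w = (\<Sum>i\<le>length w. u (take i w) * (\<Sum>k\<le>N. c k * tpow a k (drop i w)))"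
    unfolding tmul_def by (rule sum.cong) (use assms in \<open>auto simp: tsubst_ext\<close>)
  also have "\<dots> = (\<Sum>k\<le>N. c k * tmul u (tpow a k) w)"
    by (simp add: tmul_def sum_distrib_left sum_distrib_right sum.swap[of _ "{..N}"] algebra_simps)
  finally show ?thesis .
qed

lemma tmul_tsubst_left: assumes "a [] = 0" "length w \<le> N"
  shows "tmul (tsubst c a) u w = (\<Sum>k\<le>N. c k * tmul (tpow a k) u w)"
proof -
  have "tmul (tsubst c a) u w = (\<Sum>i\<le>length w. (\<Sum>k\<le>N. c k * tpow a k (take i w)) * u (drop i w))"
    unfolding tmul_def by (rule sum.cong) (use assms in \<open>auto simp: tsubst_ext[where a=a and N=N, OF assms(1)]\<close>)
  also have "\<dots> = (\<Sum>k\<le>N. c k * tmul (tpow a k) u w)"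
    by (simp add: tmul_def sum_distrib_left sum_distrib_right sum.swap[of _ "{..N}"] algebra_simps)
  finally show ?thesis .
qed

definition hom :: "tser \<Rightarrow> rat fps \<Rightarrow> tser" where
  "hom a f = tsubst (fps_nth f) a"

lemma hom_ext: "a [] = 0 \<Longrightarrow> length w \<le> N \<Longrightarrow> hom a f w = (\<Sum>k\<le>N. f $ k * tpow a k w)"
  unfolding hom_def by (rule tsubst_ext)

lemma hom_Nil: "a [] = 0 \<Longrightarrow> hom a f [] = f $ 0"
  by (simp add: hom_def tsubst_def)

lemma hom_add: "hom a (f + g) = hom a f + hom a g"
  by (rule ext) (simp add: hom_def tsubst_def algebra_simps sum.distrib)
lemma hom_diff: "hom a (f - g) = hom a f - hom a g"
  by (rule ext) (simp add: hom_def tsubst_def algebra_simps sum_subtractf)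
lemma hom_uminus: "hom a (- f) = - hom a f"
  by (rule ext) (simp add: hom_def tsubst_def sum_negf)
lemma hom_const_mult: "hom a (fps_const c * f) = tsc c (hom a f)"
  by (rule ext) (simp add: hom_def tsubst_def sum_distrib_left algebra_simps)
lemma hom_sum: "hom a (\<Sum>k\<in>A. f k) = (\<Sum>k\<in>A. hom a (f k))"
  by (rule ext) (simp add: hom_def tsubst_def tsum_apply fps_sum_nth sum_distrib_right sum.swap[of _ A])

lemma hom_one: "a [] = 0 \<Longrightarrow> hom a 1 = tone"
proof (rule ext)
  fix w assume a: "a [] = 0"
  have "hom a 1 w = (\<Sum>k\<le>length w. (if k = 0 then 1 else 0) * tpow a k w)"
    by (simp add: hom_def tsubst_def)
  also have "\<dots> = tpow a 0 w" by (simp add: sum.delta' if_distrib[of "\<lambda>x. x * _"] cong: if_cong)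
  finally show "hom a 1 w = tone w" by simp
qed

lemma hom_X_power: "a [] = 0 \<Longrightarrow> hom a (fps_X ^ k) = tpow a k"
proof (rule ext)
  fix w assume a: "a [] = 0"
  have "hom a (fps_X ^ k) w = (\<Sum>j\<le>max k (length w). (fps_X ^ k) $ j * tpow a j w)"
    by (rule hom_ext) (use a in auto)
  also have "\<dots> = tpow a k w"
    by (simp add: fps_X_power_iff if_distrib[of "\<lambda>x. x * _"] cong: if_cong)
  finally show "hom a (fps_X ^ k) w = tpow a k w" .
qed

lemma hom_X: "a [] = 0 \<Longrightarrow> hom a fps_X = a"
  using hom_X_power[of a 1] by simp

lemma hom_mult: assumes a: "a [] = 0" shows "hom a (f * g) = tmul (hom a f) (hom a g)"
proof (rule ext)
  fix w :: "nat list"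
    have "tmul (hom a f) (hom a g) w = (\<Sum>k\<le>length w. f $ k * tmul (tpow a k) (hom a g) w)"
    unfolding hom_def by (rule tmul_tsubst_left) (use a  in auto)
  also have "\<dots> = (\<Sum>k\<le>length w. \<Sum>m\<le>length w. f $ k * g $ m * tpow a (k + m) w)"
    by (rule sum.cong) (simp_all add: hom_def tmul_tsubst_right[where a=a and N="length w", OF a]  sum_distrib_left algebra_simps tpow_add)
  also have "\<dots> = (\<Sum>(k,m)\<in>{..length w}\<times>{..length w}. f $ k * g $ m * tpow a (k + m) w)"
    by (simp add: sum.cartesian_product)
  also have "\<dots> = (\<Sum>(k,m)\<in>{(i,j). i + j \<le> length w}. f $ k * g $ m * tpow a (k + m) w)"
    by (rule sum.mono_neutral_right) (auto, metis a not_le tpow_vanish)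
  also have "\<dots> = (\<Sum>j\<le>length w. \<Sum>i\<le>j. f $ i * g $ (j - i) * tpow a (i + (j - i)) w)"
    by (rule sum.triangle_reindex_eq)
  also have "\<dots> = hom a (f * g) w"
    by (simp add: hom_def tsubst_def  fps_mult_nth atLeast0AtMost sum_distrib_right)
  finally show "hom a (f * g) w = tmul (hom a f) (hom a g) w" ..
qed

lemma tpow_hom: "a [] = 0 \<Longrightarrow> tpow (hom a g) k = hom a (g ^ k)"
  by (induction k) (simp_all add: hom_one hom_mult)

lemma hom_compose: assumes a: "a [] = 0" and g: "g $ 0 = 0"
  shows "hom (hom a g) f = hom a (f oo g)"
proof (rule ext)
  fix w :: "nat list"
    have hg: "hom a g [] = 0" using a g by (simp add: hom_Nil)
  have "hom (hom a g) f w = (\<Sum>k\<le>length w. f $ k * hom a (g ^ k) w)"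
    unfolding hom_def[of "hom a g" f] tsubst_def by (simp add: tpow_hom[where a=a, OF a])
  also have "\<dots> = (\<Sum>k\<le>length w. \<Sum>j\<le>length w. f $ k * (g ^ k) $ j * tpow a j w)"
    by (rule sum.cong[OF refl]) (simp add: hom_ext[where a=a and N="length w", OF a] sum_distrib_left mult.assoc)
  also have "\<dots> = (\<Sum>j\<le>length w. \<Sum>k\<le>length w. f $ k * (g ^ k) $ j * tpow a j w)"
    by (rule sum.swap)
  also have "\<dots> = (\<Sum>j\<le>length w. (\<Sum>k\<le>length w. f $ k * (g ^ k) $ j) * tpow a j w)"
    by (simp add: sum_distrib_right)
  also have "\<dots> = (\<Sum>j\<le>length w. (f oo g) $ j * tpow a j w)"
  proof (rule sum.cong)
    fix j assume j: "j \<in> {..length w}"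
    have "(\<Sum>k\<le>length w. f $ k * (g ^ k) $ j) = (\<Sum>k\<in>{0..j}. f $ k * (g ^ k) $ j)"
      by (rule sum.mono_neutral_right) (use j startsby_zero_power_prefix[OF g] in auto)
    then show "(\<Sum>k\<le>length w. f $ k * (g ^ k) $ j) * tpow a j w = (f oo g) $ j * tpow a j w"
      by (simp add: fps_compose_nth)
  qed simp
  also have "\<dots> = hom a (f oo g) w" by (simp add: hom_def tsubst_def )
  finally show "hom (hom a g) f w = hom a (f oo g) w" .
qed

section \<open>Fox derivatives\<close>

definition Dl :: "nat \<Rightarrow> tser \<Rightarrow> tser" where "Dl x a = (\<lambda>v. a (x#v))"
definition Dr :: "nat \<Rightarrow> tser \<Rightarrow> tser" where "Dr x a = (\<lambda>v. a (v@[x]))"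

lemma Dl_add: "Dl x (a + b) = Dl x a + Dl x b" by (rule ext) (simp add: Dl_def)
lemma Dl_diff: "Dl x (a - b) = Dl x a - Dl x b" by (rule ext) (simp add: Dl_def)
lemma Dl_uminus: "Dl x (- a) = - Dl x a" by (rule ext) (simp add: Dl_def)
lemma Dl_tsc: "Dl x (tsc c a) = tsc c (Dl x a)" by (rule ext) (simp add: Dl_def)
lemma Dl_sum: "Dl x (\<Sum>k\<in>A. f k) = (\<Sum>k\<in>A. Dl x (f k))" by (rule ext) (simp add: Dl_def tsum_apply)
lemma Dl_zero[simp]: "Dl x 0 = 0" by (rule ext) (simp add: Dl_def)
lemma Dr_add: "Dr x (a + b) = Dr x a + Dr x b" by (rule ext) (simp add: Dr_def)
lemma Dr_diff: "Dr x (a - b) = Dr x a - Dr x b" by (rule ext) (simp add: Dr_def)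
lemma Dr_uminus: "Dr x (- a) = - Dr x a" by (rule ext) (simp add: Dr_def)
lemma Dr_tsc: "Dr x (tsc c a) = tsc c (Dr x a)" by (rule ext) (simp add: Dr_def)
lemma Dr_sum: "Dr x (\<Sum>k\<in>A. f k) = (\<Sum>k\<in>A. Dr x (f k))" by (rule ext) (simp add: Dr_def tsum_apply)
lemma Dr_zero[simp]: "Dr x 0 = 0" by (rule ext) (simp add: Dr_def)

lemmas D_lin = Dl_add Dl_diff Dl_uminus Dl_tsc Dl_sum Dr_add Dr_diff Dr_uminus Dr_tsc Dr_sum

lemma Dl_tone[simp]: "Dl x tone = 0" by (rule ext) (simp add: Dl_def)
lemma Dr_tone[simp]: "Dr x tone = 0" by (rule ext) (simp add: Dr_def tone_def)

lemma Dl_gen: "Dl x (gen k) = (if x = k then tone else 0)"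
  by (rule ext) (auto simp: Dl_def gen_def tone_def)
lemma Dr_gen: "Dr x (gen k) = (if x = k then tone else 0)"
  by (rule ext) (auto simp: Dr_def gen_def tone_def)

lemma gen_Nil[simp]: "gen k [] = 0" by (simp add: gen_def)

lemma Dl_tmul: "Dl x (tmul a b) = tmul (Dl x a) b + tsc (a []) (Dl x b)"
  by (rule ext) (simp add: Dl_def tmul_Cons)
lemma Dr_tmul: "Dr x (tmul a b) = tmul a (Dr x b) + tsc (b []) (Dr x a)"
  by (rule ext) (simp add: Dr_def tmul_snoc)

lemma Dl_hom: assumes a: "a [] = 0"
  shows "Dl x (hom a f) = tmul (Dl x a) (hom a (fps_shift 1 f))"
proof (rule ext)
  fix w :: "nat list"
  have "Dl x (hom a f) w = (\<Sum>k\<le>Suc (length w). f $ k * tpow a k (x#w))"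
    by (simp add: Dl_def hom_def tsubst_def)
  also have "\<dots> = (\<Sum>k\<le>length w. f $ Suc k * tpow a (Suc k) (x#w))"
    by (simp del: sum.atMost_Suc add: sum.atMost_Suc_shift)
  also have "\<dots> = (\<Sum>k\<le>length w. fps_shift 1 f $ k * tmul (Dl x a) (tpow a k) w)"
    by (rule sum.cong) (simp_all add: tmul_Cons a Dl_def)
  also have "\<dots> = tmul (Dl x a) (hom a (fps_shift 1 f)) w"
    unfolding hom_def by (rule tmul_tsubst_right[symmetric]) (use a in auto)
  finally show "Dl x (hom a f) w = tmul (Dl x a) (hom a (fps_shift 1 f)) w" .
qed

lemma Dr_hom: assumes a: "a [] = 0"
  shows "Dr x (hom a f) = tmul (hom a (fps_shift 1 f)) (Dr x a)"
proof (rule ext)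
  fix w :: "nat list"
  have "Dr x (hom a f) w = (\<Sum>k\<le>Suc (length w). f $ k * tpow a k (w@[x]))"
    by (simp add: Dr_def hom_def tsubst_def)
  also have "\<dots> = (\<Sum>k\<le>length w. f $ Suc k * tpow a (Suc k) (w@[x]))"
    by (simp del: sum.atMost_Suc add: sum.atMost_Suc_shift tone_def)
  also have "\<dots> = (\<Sum>k\<le>length w. fps_shift 1 f $ k * tmul (tpow a k) (Dr x a) w)"
    by (rule sum.cong) (simp_all del: tpow.simps add: tpow_Suc' tmul_snoc a Dr_def tone_def)
  also have "\<dots> = tmul (hom a (fps_shift 1 f)) (Dr x a) w"
    unfolding hom_def by (rule tmul_tsubst_left[symmetric]) (use a in auto)
  finally show "Dr x (hom a f) w = tmul (hom a (fps_shift 1 f)) (Dr x a) w" .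
qed

lemma in_T_add: "in_T n a \<Longrightarrow> in_T n b \<Longrightarrow> in_T n (a + b)" by (simp add: in_T_def)
lemma in_T_diff: "in_T n a \<Longrightarrow> in_T n b \<Longrightarrow> in_T n (a - b)" by (simp add: in_T_def)
lemma in_T_uminus: "in_T n a \<Longrightarrow> in_T n (- a)" by (simp add: in_T_def)
lemma in_T_tsc: "in_T n a \<Longrightarrow> in_T n (tsc c a)" by (simp add: in_T_def)
lemma in_T_zero: "in_T n 0" by (simp add: in_T_def)
lemma in_T_sum: "(\<And>k. k \<in> A \<Longrightarrow> in_T n (f k)) \<Longrightarrow> in_T n (\<Sum>k\<in>A. f k)"
  by (simp add: in_T_def tsum_apply)
lemma in_T_tone: "in_T n tone" by (simp add: in_T_def tone_def)
lemma in_T_gen: "k \<in> {1..n} \<Longrightarrow> in_T n (gen k)" by (auto simp: in_T_def gen_def)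
lemma in_T_tmul: assumes "in_T n a" "in_T n b" shows "in_T n (tmul a b)"
  unfolding in_T_def
proof (intro allI impI)
  fix w :: "nat list" assume w: "\<not> set w \<subseteq> {1..n}"
  show "tmul a b w = 0" unfolding tmul_def
  proof (rule sum.neutral, intro ballI)
    fix i assume "i \<in> {..length w}"
    have "set w = set (take i w) \<union> set (drop i w)"
      by (metis append_take_drop_id set_append)
    then have "\<not> set (take i w) \<subseteq> {1..n} \<or> \<not> set (drop i w) \<subseteq> {1..n}" using w by auto
    then show "a (take i w) * b (drop i w) = 0" using assms by (auto simp: in_T_def)
  qed
qed
lemma in_T_tpow: "in_T n a \<Longrightarrow> in_T n (tpow a k)"
  by (induction k) (simp_all add: in_T_tone in_T_tmul)
lemma in_T_tsubst: "in_T n a \<Longrightarrow> in_T n (tsubst c a)"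
  using in_T_tpow unfolding in_T_def tsubst_def by (auto intro!: sum.neutral)
lemma in_T_hom: "in_T n a \<Longrightarrow> in_T n (hom a f)"
  by (simp add: hom_def in_T_tsubst)
lemma in_T_x0: "in_T n (x0 n)"
  unfolding x0_def by (intro in_T_uminus in_T_sum in_T_gen)
lemma in_T_Dl: "in_T n a \<Longrightarrow> in_T n (Dl x a)" by (auto simp: in_T_def Dl_def)
lemma in_T_Dr: "in_T n a \<Longrightarrow> in_T n (Dr x a)" by (auto simp: in_T_def Dr_def)

lemmas in_T_intros = in_T_add in_T_diff in_T_uminus in_T_tsc in_T_zero in_T_sum in_T_tone in_T_gen
  in_T_tmul in_T_tpow in_T_tsubst in_T_hom in_T_x0 in_T_Dl in_T_Dr

section \<open>Decompositions and the star formula\<close>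

lemma tmul_gen_left_Nil[simp]: "tmul (gen i) v [] = 0" by simp
lemma tmul_gen_left_Cons: "tmul (gen i) v (x#w) = (if x = i then v w else 0)"
proof -
  have "(\<lambda>u. gen i (x#u)) = Dl x (gen i)" by (simp add: Dl_def)
  then show ?thesis by (simp add: tmul_Cons Dl_gen)
qed
lemma tmul_gen_right_snoc: "tmul v (gen i) (w@[x]) = (if x = i then v w else 0)"
proof -
  have "(\<lambda>u. gen i (u@[x])) = Dr x (gen i)" by (simp add: Dr_def)
  then show ?thesis by (simp add: tmul_snoc Dr_gen)
qed

lemma DEC_l: assumes "in_T n b"
  shows "b = tsc (b []) tone + (\<Sum>i\<in>{1..n}. tmul (gen i) (Dl i b))"
proof (rule ext)
  fix w show "b w = (tsc (b []) tone + (\<Sum>i\<in>{1..n}. tmul (gen i) (Dl i b))) w"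
  proof (cases w)
    case Nil then show ?thesis by (simp add: tsum_apply)
  next
    case (Cons x v)
    have "(\<Sum>i\<in>{1..n}. tmul (gen i) (Dl i b) (x#v)) = (if x \<in> {1..n} then b (x#v) else 0)"
      by (simp add: tmul_gen_left_Cons Dl_def if_distrib cong: if_cong)
    also have "\<dots> = b (x#v)" using assms by (auto simp: in_T_def)
    finally show ?thesis using Cons by (simp add: tsum_apply)
  qed
qed

lemma DEC_r: assumes "in_T n b"
  shows "b = tsc (b []) tone + (\<Sum>i\<in>{1..n}. tmul (Dr i b) (gen i))"
proof (rule ext)
  fix w show "b w = (tsc (b []) tone + (\<Sum>i\<in>{1..n}. tmul (Dr i b) (gen i))) w"
  proof (cases w rule: rev_exhaust)
    case Nil then show ?thesis by (simp add: tsum_apply)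
  next
    case (snoc v x)
    have "(\<Sum>i\<in>{1..n}. tmul (Dr i b) (gen i) (v@[x])) = (if x \<in> {1..n} then b (v@[x]) else 0)"
      by (simp add: tmul_gen_right_snoc Dr_def if_distrib cong: if_cong)
    also have "\<dots> = b (v@[x])" using assms by (auto simp: in_T_def)
    finally show ?thesis using snoc by (simp add: tsum_apply tone_def)
  qed
qed

lemma tmul_gen_mid: "tmul u (tmul (gen i) v) w =
   (\<Sum>j<length w. if w ! j = i then u (take j w) * v (drop (Suc j) w) else 0)"
proof -
  have "tmul u (tmul (gen i) v) w = (\<Sum>j\<le>length w. u (take j w) * tmul (gen i) v (drop j w))"
    by (simp add: tmul_def)
  also have "\<dots> = (\<Sum>j<length w. u (take j w) * tmul (gen i) v (drop j w))"
    by (simp add: lessThan_Suc_atMost[symmetric])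
  also have "\<dots> = (\<Sum>j<length w. if w ! j = i then u (take j w) * v (drop (Suc j) w) else 0)"
    by (rule sum.cong) (simp_all add: Cons_nth_drop_Suc[symmetric] tmul_gen_left_Cons)
  finally show ?thesis .
qed

lemma star_formula: assumes b: "in_T n b"
  shows "star a b = - (\<Sum>i\<in>{1..n}. tmul (Dr i a) (tmul (gen i) (Dl i b)))"
proof (rule ext)
  fix w :: "nat list"
  have "(\<Sum>i\<in>{1..n}. tmul (Dr i a) (tmul (gen i) (Dl i b)) w)
     = (\<Sum>i\<in>{1..n}. \<Sum>j<length w. if w ! j = i then a (take j w @ [i]) * b (i # drop (Suc j) w) else 0)"
    by (simp add: tmul_gen_mid Dr_def Dl_def)
  also have "\<dots> = (\<Sum>j<length w. \<Sum>i\<in>{1..n}. if w ! j = i then a (take j w @ [i]) * b (i # drop (Suc j) w) else 0)"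
    by (rule sum.swap)
  also have "\<dots> = (\<Sum>j<length w. a (take j w @ [w!j]) * b (drop j w))"
  proof (rule sum.cong)
    fix j assume j: "j \<in> {..<length w}"
    have dj: "drop j w = w!j # drop (Suc j) w" using j by (simp add: Cons_nth_drop_Suc)
    have "w ! j \<in> set (drop j w)" using dj by simp
    then have "w ! j \<notin> {1..n} \<Longrightarrow> b (drop j w) = 0" using b unfolding in_T_def by blast
    then show "(\<Sum>i\<in>{1..n}. if w ! j = i then a (take j w @ [i]) * b (i # drop (Suc j) w) else 0)
        = a (take j w @ [w!j]) * b (drop j w)"
      by (auto simp: dj sum.delta)
  qed simp
  finally show "star a b w = (- (\<Sum>i\<in>{1..n}. tmul (Dr i a) (tmul (gen i) (Dl i b)))) w"
    by (simp add: star_def tsum_apply sum_negf)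
qed

lemma star_add_left: "star (a + b) c = star a c + star b c"
  by (rule ext) (simp add: star_def sum.distrib[symmetric] algebra_simps)
lemma star_add_right: "star a (b + c) = star a b + star a c"
  by (rule ext) (simp add: star_def sum.distrib[symmetric] algebra_simps)
lemma star_diff_left: "star (a - b) c = star a c - star b c"
  by (rule ext) (simp add: star_def sum_subtractf[symmetric] algebra_simps)
lemma star_diff_right: "star a (b - c) = star a b - star a c"
  by (rule ext) (simp add: star_def sum_subtractf[symmetric] algebra_simps)
lemma star_uminus_left: "star (- a) c = - star a c"
  by (rule ext) (simp add: star_def sum_negf[symmetric])
lemma star_uminus_right: "star a (- c) = - star a c"
  by (rule ext) (simp add: star_def sum_negf[symmetric])

section \<open>Power series facts\<close>

definition EXPf :: "rat fps" where "EXPf = fps_exp 1"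
definition Bf :: "rat fps" where "Bf = fps_shift 1 (fps_exp (-1) - 1)"
definition Sf :: "rat fps" where "Sf = Abs_fps s_coeff"
definition Qf :: "rat fps" where "Qf = Abs_fps q_coeff"
definition LNf :: "rat fps" where "LNf = fps_ln 1"
definition Gf :: "rat fps" where "Gf = fps_shift 1 LNf"

lemma Bf_eq: "fps_X * Bf = fps_exp (-1) - 1"
  unfolding Bf_def
  by (intro fps_ext) (auto simp: fps_X_mult_nth nth_less_subdegree_zero)

lemma Bf0: "Bf $ 0 = -1" by (simp add: Bf_def)

lemma Bf_sub: "subdegree Bf = 0" using Bf0 by (simp add: subdegree_eq_0_iff)

lemma inv_Bf: "inverse Bf * Bf = 1" using Bf0 by (simp add: inverse_mult_eq_1)

definition Cf :: "rat fps" where "Cf = fps_shift 1 (inverse Bf + 1)"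

lemma Cf_eq: "fps_X * Cf = inverse Bf + 1"
proof -
  have "(inverse Bf + 1) $ 0 = 0" using Bf0 by simp
  then show ?thesis unfolding Cf_def
    by (intro fps_ext) (auto simp: fps_X_mult_nth)
qed

lemma fls_X_inv_X: "fls_X_inv * (fls_X :: rat fls) = 1"
  by (simp flip: fls_inverse_X)

lemma Sfls_eq: "inverse (fps_to_fls (fps_exp (-1) - 1)) + fls_X_inv = fps_to_fls Cf"
proof -
  have "inverse (fps_to_fls (fps_exp (-1) - 1)) = inverse (fls_X * fps_to_fls Bf :: rat fls)"
    by (simp flip: Bf_eq add: fls_times_fps_to_fls)
  also have "\<dots> = fls_X_inv * fps_to_fls (inverse Bf)"
    by (simp add: fls_inverse_X fls_inverse_fps_to_fls Bf_sub)
  finally have "inverse (fps_to_fls (fps_exp (-1) - 1)) + fls_X_inv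
      = fls_X_inv * fps_to_fls (inverse Bf + 1)" by (simp add: algebra_simps)
  also have "\<dots> = fls_X_inv * fps_to_fls (fps_X * Cf)" by (simp add: Cf_eq)
  also have "\<dots> = fls_X_inv * fls_X * fps_to_fls Cf" by (simp add: fls_times_fps_to_fls mult.assoc)
  also have "\<dots> = fps_to_fls Cf" by (simp add: fls_X_inv_X)
  finally show ?thesis .
qed

lemma Sf_eq: "Sf = Cf"
  unfolding Sf_def s_coeff_def Sfls_eq by (intro fps_ext) simp

lemma Sf_X: "Sf * fps_X = inverse Bf + 1"
  using Cf_eq by (simp add: Sf_eq mult.commute)

lemma Qfls_eq: "fls_X ^ 2 * inverse (fps_to_fls (fps_exp (-1) - 1)) = fps_to_fls (fps_X * inverse Bf)"
proof -
  have "inverse (fps_to_fls (fps_exp (-1) - 1)) = inverse (fls_X * fps_to_fls Bf :: rat fls)"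
    by (simp flip: Bf_eq add: fls_times_fps_to_fls)
  also have "\<dots> = fls_X_inv * fps_to_fls (inverse Bf)"
    by (simp add: fls_inverse_X fls_inverse_fps_to_fls Bf_sub)
  finally have "fls_X ^ 2 * inverse (fps_to_fls (fps_exp (-1) - 1))
     = fls_X * (fls_X_inv * fls_X) * fps_to_fls (inverse Bf)"
    by (simp add: power2_eq_square algebra_simps)
  also have "\<dots> = fps_to_fls (fps_X * inverse Bf)"
    by (simp add: fls_X_inv_X fls_times_fps_to_fls)
  finally show ?thesis .
qed

lemma Qf_eq: "Qf = fps_X * inverse Bf"
  unfolding Qf_def q_coeff_def Qfls_eq by (intro fps_ext) simp

lemma Qf_Sf: "Qf = Sf * fps_X ^ 2 - fps_X"
proof -
  have "Sf * fps_X ^ 2 = (Sf * fps_X) * fps_X" by (simp add: power2_eq_square mult.assoc)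
  also have "\<dots> = (inverse Bf + 1) * fps_X" by (simp add: Sf_X)
  finally show ?thesis by (simp add: Qf_eq algebra_simps)
qed

lemma exp_inv: "EXPf * fps_exp (-1) = 1"
  by (simp add: EXPf_def flip: fps_exp_add_mult)

lemma I1: "(1 - Sf * fps_X) * (EXPf - 1) = fps_X * EXPf"
proof -
  have e: "EXPf - 1 = - (fps_X * Bf * EXPf)"
    using exp_inv by (simp add: Bf_eq algebra_simps)
  have "(1 - Sf * fps_X) * (EXPf - 1) = (- inverse Bf) * (- (fps_X * Bf * EXPf))"
    by (simp only: Sf_X e) simp
  also have "\<dots> = (inverse Bf * Bf) * fps_X * EXPf"
    by (simp add: algebra_simps)
  finally have "(1 - Sf * fps_X) * (EXPf - 1) = (inverse Bf * Bf) * fps_X * EXPf" .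
  then show ?thesis by (simp add: inv_Bf)
qed

lemma EXP0: "EXPf $ 0 = 1" by (simp add: EXPf_def)

lemma EXP_shift: "fps_X * fps_shift 1 EXPf = EXPf - 1"
  by (intro fps_ext) (auto simp: EXPf_def fps_X_mult_nth)

lemma LN0: "LNf $ 0 = 0" by (simp add: LNf_def)

lemma LN_G: "LNf = fps_X * Gf"
  unfolding Gf_def by (intro fps_ext) (auto simp: fps_X_mult_nth LN0)

lemma G0: "Gf $ 0 = 1" by (simp add: Gf_def LNf_def fps_ln_nth)

lemma EXP_LN: "EXPf oo LNf = 1 + fps_X"
proof -
  have "(EXPf - 1) oo LNf = fps_X"
    unfolding LNf_def EXPf_def using fps_inv_fps_exp_compose(2)[of "1::rat"]
    by (simp add: fps_ln_fps_exp_inv)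
  then show ?thesis by (simp add: fps_compose_sub_distrib algebra_simps)
qed

lemma I2: "(1 + fps_X) * Gf + (Sf oo LNf) * LNf = 1"
proof -
  have "(Sf oo LNf) * LNf = (Sf * fps_X) oo LNf"
    by (simp add: fps_compose_mult_distrib LN0)
  also have "\<dots> = inverse (Bf oo LNf) + 1"
    by (simp add: Sf_X fps_compose_add_distrib fps_inverse_compose LN0 Bf0)
  finally have 1: "(Sf oo LNf) * LNf = inverse (Bf oo LNf) + 1" .
  have "LNf * (Bf oo LNf) = (fps_X * Bf) oo LNf"
    by (simp add: fps_compose_mult_distrib LN0)
  also have "\<dots> = inverse (1 + fps_X) - 1"
    by (simp add: Bf_eq fps_compose_sub_distrib fps_exp_neg fps_inverse_compose LN0 EXP0
        flip: EXPf_def EXP_LN)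
  also have "\<dots> = fps_X * (- inverse (1 + fps_X))"
  proof -
    have "inverse (1 + fps_X) * (1 + fps_X) = (1 :: rat fps)" by (simp add: inverse_mult_eq_1)
    then show ?thesis by (simp add: algebra_simps)
  qed
  finally have "fps_X * (Gf * (Bf oo LNf)) = fps_X * (- inverse (1 + fps_X))"
    by (simp add: LN_G mult.assoc)
  then have 2: "Gf * (Bf oo LNf) = - inverse (1 + fps_X)"
    using mult_left_cancel[of "fps_X :: rat fps"] by (simp only: fps_X_neq_zero not_False_eq_True)
  have "(- ((1 + fps_X) * Gf)) * (Bf oo LNf) = 1"
  proof -
    have "(- ((1 + fps_X) * Gf)) * (Bf oo LNf) = (1 + fps_X) * inverse (1 + fps_X)"
      using 2 by (simp add: mult.assoc)
    also have "\<dots> = 1"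
    proof -
      have h: "inverse (1 + fps_X) * (1 + fps_X) = (1::rat fps)" by (simp add: inverse_mult_eq_1)
      then show ?thesis by (simp only: mult.commute)
    qed
    finally show ?thesis .
  qed
  then have "inverse (Bf oo LNf) = - ((1 + fps_X) * Gf)"
    using fps_inverse_unique[of "Bf oo LNf"] by (simp add: mult.commute)
  with 1 show ?thesis by simp
qed

definition eX :: "nat \<Rightarrow> tser" where "eX k = hom (gen k) EXPf"
definition fX :: "nat \<Rightarrow> tser" where "fX k = hom (gen k) (fps_shift 1 EXPf)"
definition sX :: "nat \<Rightarrow> tser" where "sX k = hom (gen k) (Sf * fps_X)"

lemma texp_eq: "texp a = hom a EXPf"
proof -
  have "(\<lambda>k. 1 / of_nat (fact k)) = fps_nth EXPf" by (rule ext) (simp add: EXPf_def)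
  then show ?thesis by (simp add: texp_def hom_def)
qed

lemma texp_gen: "texp (gen k) = eX k" by (simp add: texp_eq eX_def)

lemma eX_Nil[simp]: "eX k [] = 1" by (simp add: eX_def hom_Nil EXP0)
lemma fX_Nil[simp]: "fX k [] = 1" by (simp add: fX_def hom_Nil EXPf_def)

lemma hom_gen_comm: "tmul (hom (gen k) f) (hom (gen k) g) = tmul (hom (gen k) g) (hom (gen k) f)"
  by (simp add: hom_mult[symmetric] mult.commute)

lemma gen_hom: "gen k = hom (gen k) fps_X" by (simp add: hom_X)
lemma tone_hom: "tone = hom (gen k) 1" by (simp add: hom_one)

lemma hom_gen_mult: "tmul (hom (gen i) f) (hom (gen i) g) = hom (gen i) (f * g)"
  by (simp add: hom_mult)

lemma gen_fX: "tmul (gen i) (fX i) = eX i - tone"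
proof -
  have "tmul (gen i) (fX i) = hom (gen i) (fps_X * fps_shift 1 EXPf)"
    by (simp only: hom_gen_mult[symmetric] hom_X[where a="gen i", OF gen_Nil] fX_def)
  then show ?thesis by (simp only: EXP_shift hom_diff hom_one[where a="gen i", OF gen_Nil] eX_def)
qed
lemma fX_gen: "tmul (fX i) (gen i) = eX i - tone"
proof -
  have "tmul (fX i) (gen i) = hom (gen i) (fps_shift 1 EXPf * fps_X)"
    by (simp only: hom_gen_mult[symmetric] hom_X[where a="gen i", OF gen_Nil] fX_def)
  then show ?thesis by (simp only: mult.commute[of _ fps_X] EXP_shift hom_diff hom_one[where a="gen i", OF gen_Nil] eX_def)
qed

lemma sX_eX: "tmul (tone - sX i) (eX i - tone) = tmul (gen i) (eX i)"
proof -
  have "tmul (tone - sX i) (eX i - tone) = hom (gen i) ((1 - Sf * fps_X) * (EXPf - 1))"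
    by (simp add: hom_mult hom_diff hom_one sX_def eX_def)
  also have "\<dots> = tmul (gen i) (eX i)"
    by (simp add: I1 hom_mult hom_X eX_def)
  finally show ?thesis .
qed

lemma eX_sX: "tmul (eX i - tone) (tone - sX i) = tmul (eX i) (gen i)"
proof -
  have "tmul (eX i - tone) (tone - sX i) = hom (gen i) ((EXPf - 1) * (1 - Sf * fps_X))"
    by (simp only: hom_gen_mult[symmetric] hom_diff hom_one[where a="gen i", OF gen_Nil] sX_def eX_def)
  also have "\<dots> = hom (gen i) ((1 - Sf * fps_X) * (EXPf - 1))" by (simp only: mult.commute[of "EXPf - 1" "1 - Sf * fps_X"])
  also have "\<dots> = hom (gen i) (EXPf * fps_X)" by (simp only: I1 mult.commute[of fps_X EXPf])
  also have "\<dots> = tmul (eX i) (gen i)"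
    by (simp only: hom_gen_mult[symmetric] hom_X[where a="gen i", OF gen_Nil] eX_def)
  finally show ?thesis .
qed

lemma Dl_eX: "Dl i (eX k) = (if i = k then fX k else 0)"
  by (simp add: eX_def Dl_hom Dl_gen fX_def)
lemma Dr_eX: "Dr i (eX k) = (if i = k then fX k else 0)"
  by (simp add: eX_def Dr_hom Dr_gen fX_def)

definition Psuf :: "nat \<Rightarrow> nat \<Rightarrow> tser" where
  "Psuf n m = foldr tmul (map (\<lambda>k. texp (gen k)) [m..<n+1]) tone"
definition Qpre :: "nat \<Rightarrow> tser" where
  "Qpre m = foldr tmul (map (\<lambda>k. texp (gen k)) [1..<m+1]) tone"

lemma Psuf_step: "m \<le> n \<Longrightarrow> Psuf n m = tmul (eX m) (Psuf n (Suc m))"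
  by (simp del: upt_Suc add: Psuf_def upt_conv_Cons texp_gen)
lemma Psuf_end: "Psuf n (Suc n) = tone" by (simp add: Psuf_def)

lemma foldr_tmul_init: "foldr tmul xs y = tmul (foldr tmul xs tone) y"
  by (induction xs) (simp_all add: tmul_assoc)

lemma Qpre_0: "Qpre 0 = tone" by (simp add: Qpre_def)
lemma Qpre_Suc: "Qpre (Suc m) = tmul (Qpre m) (eX (Suc m))"
proof -
  have "Qpre (Suc m) = foldr tmul (map (\<lambda>k. texp (gen k)) [1..<m+1]) (tmul (eX (Suc m)) tone)"
    by (simp add: Qpre_def texp_gen)
  then show ?thesis by (subst (asm) foldr_tmul_init) (simp add: Qpre_def)
qed

lemma Psuf_Nil: "m \<le> Suc n \<Longrightarrow> Psuf n m [] = 1"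
proof (induction m rule: inc_induct)
  case base then show ?case by (simp add: Psuf_end)
next
  case (step m) then show ?case by (simp add: Psuf_step)
qed

lemma Qpre_Nil: "Qpre m [] = 1"
  by (induction m) (simp_all add: Qpre_0 Qpre_Suc)

lemma Qpre_Psuf: "Qpre n = Psuf n 1"
  by (simp add: Qpre_def Psuf_def)

lemma Dl_Psuf: "m \<le> Suc n \<Longrightarrow>
   Dl i (Psuf n m) = (if m \<le> i \<and> i \<le> n then tmul (fX i) (Psuf n (Suc i)) else 0)"
proof (induction m rule: inc_induct)
  case base then show ?case by (auto simp: Psuf_end)
next
  case (step m)
  have "Dl i (Psuf n m) = tmul (Dl i (eX m)) (Psuf n (Suc m)) + Dl i (Psuf n (Suc m))"
    using step by (simp add: Psuf_step Dl_tmul tsc_def)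
  then show ?case using step by (auto simp: Dl_eX)
qed

lemma Dr_Qpre: "Dr i (Qpre m) = (if 1 \<le> i \<and> i \<le> m then tmul (Qpre (i - 1)) (fX i) else 0)"
proof (induction m)
  case 0 then show ?case by (auto simp: Qpre_0)
next
  case (Suc m)
  have "Dr i (Qpre (Suc m)) = tmul (Qpre m) (Dr i (eX (Suc m))) + Dr i (Qpre m)"
    by (simp add: Qpre_Suc Dr_tmul tsc_def)
  then show ?case using Suc by (auto simp: Dr_eX)
qed

definition EE :: "nat \<Rightarrow> tser" where "EE n = foldr tmul (map (\<lambda>k. texp (gen k)) [1..<n+1]) tone"
definition LL :: "nat \<Rightarrow> tser" where "LL n = EE n - tone"
definition GG :: "nat \<Rightarrow> tser" where "GG n = hom (LL n) Gf"
definition SXi :: "nat \<Rightarrow> tser" where "SXi n = tsubst s_coeff (Xi n)"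

lemma EE_Psuf: "EE n = Psuf n 1" by (simp add: EE_def Psuf_def)
lemma EE_Qpre: "EE n = Qpre n" by (simp add: EE_def Qpre_def)
lemma EE_Nil: "EE n [] = 1" by (simp add: EE_Qpre Qpre_Nil)
lemma LL_Nil: "LL n [] = 0" by (simp add: LL_def EE_Nil)

lemma tlog_eq: "tlog b = hom (b - tone) LNf"
proof -
  have "(\<lambda>k. if k = 0 then 0 else (-1) ^ (k + 1) / of_nat k :: rat) = fps_nth LNf"
  proof (rule ext)
    fix k :: nat show "(if k = 0 then 0 else (-1) ^ (k + 1) / of_nat k :: rat) = LNf $ k"
      by (cases k) (simp_all add: LNf_def fps_ln_nth)
  qed
  then show ?thesis by (simp add: tlog_def hom_def)
qed

lemma Xi_eq: "Xi n = hom (LL n) LNf"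
  by (simp add: Xi_def tlog_eq LL_def EE_def)

lemma Xi_Nil: "Xi n [] = 0" by (simp add: Xi_eq hom_Nil LL_Nil LN0)

lemma tsubst_Sf: "tsubst s_coeff a = hom a Sf"
proof -
  have "fps_nth Sf = s_coeff" by (rule ext) (simp add: Sf_def)
  then show ?thesis by (simp add: hom_def)
qed

lemma SXi_eq: "SXi n = hom (LL n) (Sf oo LNf)"
  by (simp add: SXi_def tsubst_Sf Xi_eq hom_compose[where a="LL n", OF LL_Nil] LN0)

lemma EE_hom: "EE n = hom (LL n) (1 + fps_X)"
  by (simp add: hom_add hom_one[where a="LL n", OF LL_Nil] hom_X[where a="LL n", OF LL_Nil]) (simp add: LL_def)

lemma key1: "tmul (EE n) (GG n) + tmul (SXi n) (Xi n) = tone"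
proof -
  have "tmul (EE n) (GG n) + tmul (SXi n) (Xi n) = hom (LL n) ((1 + fps_X) * Gf + (Sf oo LNf) * LNf)"
    by (simp only: EE_hom GG_def SXi_eq Xi_eq hom_add hom_mult[where a="LL n", OF LL_Nil])
  then show ?thesis by (simp add: I2 hom_one[where a="LL n", OF LL_Nil])
qed

lemma key2: "tmul (GG n) (EE n) + tmul (Xi n) (SXi n) = tone"
proof -
  have "tmul (GG n) (EE n) + tmul (Xi n) (SXi n) = hom (LL n) (Gf * (1 + fps_X) + LNf * (Sf oo LNf))"
    by (simp only: EE_hom GG_def SXi_eq Xi_eq hom_add hom_mult[where a="LL n", OF LL_Nil])
  then show ?thesis using I2 by (simp add: mult.commute hom_one[where a="LL n", OF LL_Nil])
qed

lemma GG_def': "GG n = hom (LL n) (fps_shift 1 LNf)" by (simp add: GG_def Gf_def)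

lemma Dl_Xi: assumes "i \<in> {1..n}" shows "Dl i (Xi n) = tmul (fX i) (tmul (Psuf n (Suc i)) (GG n))"
proof -
  have "Dl i (Xi n) = tmul (Dl i (LL n)) (GG n)"
    by (simp only: Xi_eq Dl_hom[where a="LL n", OF LL_Nil] GG_def')
  then show ?thesis using assms by (simp add: LL_def Dl_diff EE_Psuf Dl_Psuf tmul_assoc)
qed

lemma Dr_Xi: assumes "i \<in> {1..n}" shows "Dr i (Xi n) = tmul (GG n) (tmul (Qpre (i - 1)) (fX i))"
proof -
  have "Dr i (Xi n) = tmul (GG n) (Dr i (LL n))"
    by (simp only: Xi_eq Dr_hom[where a="LL n", OF LL_Nil] GG_def')
  then show ?thesis using assms by (simp add: LL_def Dr_diff EE_Qpre Dr_Qpre)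
qed

lemma GG_Nil: "GG n [] = 1" by (simp add: GG_def hom_Nil LL_Nil G0)

lemma Xi_single: assumes "k \<in> {1..n}" shows "Xi n [k] = 1"
proof -
  have "Xi n [k] = Dl k (Xi n) []" by (simp add: Dl_def)
  also have "\<dots> = 1" using assms by (simp add: Dl_Xi Psuf_Nil GG_Nil)
  finally show ?thesis .
qed

lemma in_T_foldr: "(\<And>x. x \<in> set xs \<Longrightarrow> in_T n x) \<Longrightarrow> in_T n (foldr tmul xs tone)"
  by (induction xs) (auto simp: in_T_tone intro: in_T_tmul)

lemma in_T_EE: "in_T n (EE n)"
  unfolding EE_def by (rule in_T_foldr) (auto simp: texp_eq intro!: in_T_hom in_T_gen)

section \<open>The candidate inverse\<close>

definition Sge :: "nat \<Rightarrow> nat \<Rightarrow> tser" where "Sge n i = (\<Sum>k\<in>{i..n}. gen k)"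
definition Slt :: "nat \<Rightarrow> tser" where "Slt i = (\<Sum>k\<in>{1..<i}. gen k)"
definition SS :: "nat \<Rightarrow> tser" where "SS n = (\<Sum>k\<in>{1..n}. \<Sum>l\<in>{1..<k}. tmul (gen k) (gen l))"
definition SQ :: "nat \<Rightarrow> tser" where
  "SQ n = (\<Sum>k\<in>{1..n}. tmul (tsubst s_coeff (gen k)) (tpow (gen k) 2))"
definition RR :: "nat \<Rightarrow> tser" where "RR n = x0 n - SS n + SQ n"
definition WW :: "nat \<Rightarrow> tser" where "WW n = tmul (tmul (x0 n) (SXi n)) (x0 n)"

lemma SQ_eq: "SQ n = (\<Sum>k\<in>{1..n}. hom (gen k) (Sf * fps_X ^ 2))"
  by (simp add: SQ_def tsubst_Sf hom_X_power[symmetric] hom_gen_mult)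

lemma Sge_split: "i \<le> n \<Longrightarrow> Sge n i = gen i + Sge n (Suc i)"
  by (simp add: Sge_def sum.atLeast_Suc_atMost)
lemma Sge_end: "Sge n (Suc n) = 0" by (simp add: Sge_def)
lemma Slt_split: "1 \<le> i \<Longrightarrow> Slt (Suc i) = Slt i + gen i"
  by (simp add: Slt_def)
lemma Slt_1: "Slt 1 = 0" "Slt (Suc 0) = 0" by (simp_all add: Slt_def)
lemma x0_Sge: "x0 n = - Sge n 1" by (simp add: x0_def Sge_def)
lemma x0_Slt: "x0 n = - Slt (Suc n)" by (simp add: x0_def Slt_def atLeastLessThanSuc_atLeastAtMost)

lemma x0_Nil: "x0 n [] = 0" by (simp add: x0_def tsum_apply)
lemma Dr_x0: "i \<in> {1..n} \<Longrightarrow> Dr i (x0 n) = - tone"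
  by (simp add: x0_def Dr_uminus Dr_sum Dr_gen)
lemma Dl_x0: "i \<in> {1..n} \<Longrightarrow> Dl i (x0 n) = - tone"
  by (simp add: x0_def Dl_uminus Dl_sum Dl_gen)

lemma shift_SfX2: "fps_shift 1 (Sf * fps_X ^ 2) = Sf * fps_X" "fps_shift (Suc 0) (Sf * fps_X ^ 2) = Sf * fps_X"
proof -
  have "Sf * fps_X ^ 2 = (Sf * fps_X) * fps_X" by (simp add: power2_eq_square mult.assoc)
  then show "fps_shift 1 (Sf * fps_X ^ 2) = Sf * fps_X" by (simp only: fps_shift_times_fps_X')
  then show "fps_shift (Suc 0) (Sf * fps_X ^ 2) = Sf * fps_X" by simp
qed

lemma tsc_zero[simp]: "tsc 0 a = 0" by (rule ext) simp
lemma tmul_if_right: "tmul a (if P then b else c) = (if P then tmul a b else tmul a c)" by simp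
lemma tmul_if_left: "tmul (if P then b else c) a = (if P then tmul b a else tmul c a)" by simp

lemma Dr_SS: assumes i: "i \<in> {1..n}" shows "Dr i (SS n) = Sge n (Suc i)"
proof -
  have "Dr i (SS n) = (\<Sum>k\<in>{1..n}. \<Sum>l\<in>{1..<k}. if i = l then gen k else 0)"
    by (simp add: SS_def Dr_sum Dr_tmul Dr_gen tmul_if_right cong: if_cong)
  also have "\<dots> = (\<Sum>k\<in>{1..n}. if i < k then gen k else 0)"
    by (rule sum.cong) (use i in \<open>auto simp: sum.delta\<close>)
  also have "\<dots> = (\<Sum>k\<in>{k\<in>{1..n}. i < k}. gen k)"
    by (rule sum.inter_filter[symmetric]) simp
  also have "{k\<in>{1..n}. i < k} = {Suc i..n}" using i by auto
  finally show ?thesis by (simp add: Sge_def)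
qed

lemma Dl_SS: assumes i: "i \<in> {1..n}" shows "Dl i (SS n) = Slt i"
proof -
  have "Dl i (SS n) = (\<Sum>k\<in>{1..n}. \<Sum>l\<in>{1..<k}. if i = k then gen l else 0)"
    by (simp add: SS_def Dl_sum Dl_tmul Dl_gen tmul_if_left cong: if_cong)
  also have "\<dots> = (\<Sum>k\<in>{1..n}. if i = k then Slt k else 0)"
    by (rule sum.cong) (auto simp: Slt_def)
  also have "\<dots> = Slt i" using i by (simp add: sum.delta)
  finally show ?thesis .
qed

lemma Dr_SQ: assumes i: "i \<in> {1..n}" shows "Dr i (SQ n) = sX i"
proof -
  have "Dr i (SQ n) = (\<Sum>k\<in>{1..n}. if i = k then sX k else 0)"
    by (rule trans[OF _ sum.cong[OF refl]], simp add: SQ_eq Dr_sum)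
       (simp add: Dr_hom Dr_gen shift_SfX2 sX_def)
  also have "\<dots> = sX i" using i by (simp add: sum.delta)
  finally show ?thesis .
qed

lemma Dl_SQ: assumes i: "i \<in> {1..n}" shows "Dl i (SQ n) = sX i"
proof -
  have "Dl i (SQ n) = (\<Sum>k\<in>{1..n}. if i = k then sX k else 0)"
    by (rule trans[OF _ sum.cong[OF refl]], simp add: SQ_eq Dl_sum)
       (simp add: Dl_hom Dl_gen shift_SfX2 sX_def)
  also have "\<dots> = sX i" using i by (simp add: sum.delta)
  finally show ?thesis .
qed

lemma Dr_RR: "i \<in> {1..n} \<Longrightarrow> Dr i (RR n) = sX i - tone - Sge n (Suc i)"
  by (simp add: RR_def Dr_add Dr_diff Dr_x0 Dr_SS Dr_SQ)
lemma Dl_RR: "i \<in> {1..n} \<Longrightarrow> Dl i (RR n) = sX i - tone - Slt i"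
  by (simp add: RR_def Dl_add Dl_diff Dl_x0 Dl_SS Dl_SQ)

lemma in_T_SS: "in_T n (SS n)"
  unfolding SS_def by (intro in_T_sum in_T_tmul in_T_gen) auto
lemma in_T_SQ: "in_T n (SQ n)"
  unfolding SQ_def by (intro in_T_sum in_T_tmul in_T_gen in_T_tsubst in_T_tpow) auto
lemma in_T_RR: "in_T n (RR n)"
  unfolding RR_def by (intro in_T_add in_T_diff in_T_x0 in_T_SS in_T_SQ)
lemma in_T_Xi: "in_T n (Xi n)"
  unfolding Xi_eq LL_def by (intro in_T_hom in_T_diff in_T_EE in_T_tone)
lemma in_T_WW: "in_T n (WW n)"
  unfolding WW_def SXi_def by (intro in_T_tmul in_T_x0 in_T_tsubst in_T_Xi)

lemma RR_Nil: "RR n [] = 0"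
  by (simp add: RR_def SS_def SQ_def tsum_apply x0_Nil tpow_Nil[where a="gen _", OF gen_Nil])
lemma WW_Nil: "WW n [] = 0"
  by (simp add: WW_def x0_Nil)

lemma star_W1: assumes b: "in_T n b" "b [] = 0"
  shows "star (tmul u (x0 n)) b = tmul u b"
proof -
  have "star (tmul u (x0 n)) b = - (\<Sum>i\<in>{1..n}. tmul (Dr i (tmul u (x0 n))) (tmul (gen i) (Dl i b)))"
    by (rule star_formula[OF b(1)])
  also have "\<dots> = (\<Sum>i\<in>{1..n}. tmul u (tmul (gen i) (Dl i b)))"
    by (simp add: Dr_tmul Dr_x0 x0_Nil tmul_uminus_left tmul_uminus_right sum_negf tsc_def zero_fun_def[symmetric])
  also have "\<dots> = tmul u b"
    using DEC_l[OF b(1)] b(2) by (simp add: tmul_sum_right[symmetric] tsc_def zero_fun_def[symmetric])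
  finally show ?thesis .
qed

lemma star_W2: assumes a: "in_T n a" "a [] = 0" and v: "in_T n v"
  shows "star a (tmul (x0 n) v) = tmul a v"
proof -
  have "star a (tmul (x0 n) v) = - (\<Sum>i\<in>{1..n}. tmul (Dr i a) (tmul (gen i) (Dl i (tmul (x0 n) v))))"
    by (rule star_formula) (intro in_T_tmul in_T_x0 v)
  also have "\<dots> = (\<Sum>i\<in>{1..n}. tmul (tmul (Dr i a) (gen i)) v)"
    by (simp add: Dl_tmul Dl_x0 x0_Nil tmul_uminus_left tmul_uminus_right sum_negf tsc_def
        zero_fun_def[symmetric] tmul_assoc)
  also have "\<dots> = tmul a v"
    using DEC_r[OF a(1)] a(2) by (simp add: tmul_sum_left[symmetric] tsc_def zero_fun_def[symmetric])
  finally show ?thesis .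
qed

lemma tele_up: fixes F :: "nat \<Rightarrow> 'a :: ab_group_add" and n :: nat
  shows "(\<Sum>i\<in>{1..n}. F (Suc i) - F i) = F (Suc n) - F 1"
  by (induction n) (simp_all add: atLeastAtMostSuc_conv)

lemma tele_down: fixes H :: "nat \<Rightarrow> 'a :: ab_group_add" and n :: nat
  shows "(\<Sum>i\<in>{1..n}. H (i - 1) - H i) = H 0 - H n"
  by (induction n) (simp_all add: atLeastAtMostSuc_conv)

lemma perA: assumes i: "i \<in> {1..n}"
  shows "tmul (sX i - tone - Sge n (Suc i)) (tmul (gen i) (fX i))
       = Sge n (Suc i) - tmul (Sge n i) (eX i)"
proof -
  have sp: "Sge n i = gen i + Sge n (Suc i)" using i by (simp add: Sge_split)
  have e: "sX i - tone - Sge n (Suc i) = - (tone - sX i) - Sge n (Suc i)" by simp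
  have "tmul (sX i - tone - Sge n (Suc i)) (tmul (gen i) (fX i))
     = - tmul (tone - sX i) (eX i - tone) - tmul (Sge n (Suc i)) (eX i - tone)"
    by (simp only: gen_fX e tmul_diff_left tmul_uminus_left)
  also have "\<dots> = - tmul (gen i) (eX i) - (tmul (Sge n (Suc i)) (eX i) - Sge n (Suc i))"
    by (simp only: sX_eX) (simp only: tmul_diff_right tmul_tone_right)
  also have "\<dots> = Sge n (Suc i) - tmul (Sge n i) (eX i)"
    by (simp only: sp tmul_add_left) simp
  finally show ?thesis .
qed

lemma perB: assumes i: "i \<in> {1..n}"
  shows "tmul (fX i) (tmul (gen i) (sX i - tone - Slt i)) = Slt i - tmul (eX i) (Slt (Suc i))"
proof -
  have sp: "Slt (Suc i) = Slt i + gen i" using i by (simp add: Slt_split)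
  have e: "sX i - tone - Slt i = - (tone - sX i) - Slt i" by simp
  have "tmul (fX i) (tmul (gen i) (sX i - tone - Slt i)) = tmul (eX i - tone) (sX i - tone - Slt i)"
    by (simp only: tmul_assoc[symmetric] fX_gen)
  also have "\<dots> = - tmul (eX i - tone) (tone - sX i) - tmul (eX i - tone) (Slt i)"
    by (simp only: e tmul_diff_right tmul_uminus_right)
  also have "\<dots> = - tmul (eX i) (gen i) - (tmul (eX i) (Slt i) - Slt i)"
    by (simp only: eX_sX) (simp only: tmul_diff_left tmul_tone_left)
  also have "\<dots> = Slt i - tmul (eX i) (Slt (Suc i))"
    by (simp only: sp tmul_add_right) simp
  finally show ?thesis .
qed

lemma star_RR_Xi: "star (RR n) (Xi n) = tmul (Sge n 1) (tmul (EE n) (GG n))"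
proof -
  define F where "F j = tmul (Sge n j) (tmul (Psuf n j) (GG n))" for j
  have "star (RR n) (Xi n) = - (\<Sum>i\<in>{1..n}. tmul (Dr i (RR n)) (tmul (gen i) (Dl i (Xi n))))"
    by (rule star_formula[OF in_T_Xi])
  also have "(\<Sum>i\<in>{1..n}. tmul (Dr i (RR n)) (tmul (gen i) (Dl i (Xi n))))
      = (\<Sum>i\<in>{1..n}. F (Suc i) - F i)"
  proof (rule sum.cong[OF refl])
    fix i assume i: "i \<in> {1..n}"
    have "tmul (Dr i (RR n)) (tmul (gen i) (Dl i (Xi n)))
       = tmul (tmul (sX i - tone - Sge n (Suc i)) (tmul (gen i) (fX i))) (tmul (Psuf n (Suc i)) (GG n))"
      using i by (simp only: Dr_RR Dl_Xi tmul_assoc)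
    also have "\<dots> = tmul (Sge n (Suc i) - tmul (Sge n i) (eX i)) (tmul (Psuf n (Suc i)) (GG n))"
      by (simp only: perA[OF i])
    also have "\<dots> = F (Suc i) - F i"
    proof -
      have iin: "i \<le> n" using i by simp
      show ?thesis by (simp only: F_def tmul_diff_left tmul_assoc Psuf_step[OF iin])
    qed
    finally show "tmul (Dr i (RR n)) (tmul (gen i) (Dl i (Xi n))) = F (Suc i) - F i" .
  qed
  also have "\<dots> = F (Suc n) - F 1" by (rule tele_up)
  finally show ?thesis by (simp add: F_def Sge_end EE_Psuf)
qed

lemma star_Xi_RR: "star (Xi n) (RR n) = tmul (GG n) (tmul (EE n) (Slt (Suc n)))"
proof -
  define H where "H j = tmul (GG n) (tmul (Qpre j) (Slt (Suc j)))" for j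
  have "star (Xi n) (RR n) = - (\<Sum>i\<in>{1..n}. tmul (Dr i (Xi n)) (tmul (gen i) (Dl i (RR n))))"
    by (rule star_formula[OF in_T_RR])
  also have "(\<Sum>i\<in>{1..n}. tmul (Dr i (Xi n)) (tmul (gen i) (Dl i (RR n))))
      = (\<Sum>i\<in>{1..n}. H (i - 1) - H i)"
  proof (rule sum.cong[OF refl])
    fix i assume i: "i \<in> {1..n}"
    then obtain j where j: "i = Suc j" by (cases i) auto
    have "tmul (Dr i (Xi n)) (tmul (gen i) (Dl i (RR n)))
       = tmul (GG n) (tmul (Qpre (i - 1)) (tmul (fX i) (tmul (gen i) (sX i - tone - Slt i))))"
      using i by (simp only: Dr_Xi Dl_RR tmul_assoc)
    also have "\<dots> = tmul (GG n) (tmul (Qpre (i - 1)) (Slt i - tmul (eX i) (Slt (Suc i))))"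
      by (simp only: perB[OF i])
    also have "\<dots> = H (i - 1) - H i"
      by (simp only: H_def tmul_diff_right tmul_assoc j diff_Suc_1 Qpre_Suc)
    finally show "tmul (Dr i (Xi n)) (tmul (gen i) (Dl i (RR n))) = H (i - 1) - H i" .
  qed
  also have "\<dots> = H 0 - H n" by (rule tele_down)
  finally show ?thesis by (simp only: H_def Slt_1 Qpre_0 tmul_zero_right diff_0 minus_minus EE_Qpre)
qed

lemma ZY: "star (RR n - WW n) (- Xi n) = x0 n"
proof -
  have "star (RR n - WW n) (- Xi n) = - star (RR n) (Xi n) + star (WW n) (Xi n)"
    by (simp add: star_diff_left star_uminus_right)
  also have "star (WW n) (Xi n) = tmul (tmul (x0 n) (SXi n)) (Xi n)"
    unfolding WW_def by (rule star_W1[OF in_T_Xi Xi_Nil])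
  also have "- star (RR n) (Xi n) = tmul (x0 n) (tmul (EE n) (GG n))"
    by (simp add: star_RR_Xi x0_Sge tmul_uminus_left)
  finally have "star (RR n - WW n) (- Xi n) = tmul (x0 n) (tmul (EE n) (GG n) + tmul (SXi n) (Xi n))"
    by (simp only: tmul_add_right tmul_assoc)
  then show ?thesis by (simp add: key1)
qed

lemma YZ: "star (- Xi n) (RR n - WW n) = x0 n"
proof -
  have "star (- Xi n) (RR n - WW n) = - star (Xi n) (RR n) + star (Xi n) (WW n)"
    by (simp add: star_diff_right star_uminus_left)
  also have "star (Xi n) (WW n) = tmul (Xi n) (tmul (SXi n) (x0 n))"
    unfolding WW_def tmul_assoc
    by (rule star_W2[OF in_T_Xi Xi_Nil]) (unfold SXi_def; intro in_T_tmul in_T_tsubst in_T_Xi in_T_x0)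
  also have "- star (Xi n) (RR n) = tmul (tmul (GG n) (EE n)) (x0 n)"
    by (simp add: star_Xi_RR x0_Slt tmul_uminus_right tmul_assoc)
  finally have "star (- Xi n) (RR n - WW n) = tmul (tmul (GG n) (EE n) + tmul (Xi n) (SXi n)) (x0 n)"
    by (simp only: tmul_add_left tmul_assoc)
  then show ?thesis by (simp add: key2)
qed

section \<open>Uniqueness and the main theorem\<close>

lemma left_inv_unique:
  assumes D: "in_T n D" "D [] = 0" "star D (- Xi n) = 0"
  shows "D = 0"
proof (rule ext)
  fix w show "D w = 0 w"
  proof (induction w rule: length_induct)
    case (1 w)
    show ?case
    proof (cases "set w \<subseteq> {1..n}")
      case False then show ?thesis using D(1) by (simp add: in_T_def)
    next
      case True
      show ?thesis
      proof (cases w rule: rev_exhaust)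
        case Nil then show ?thesis using D(2) by simp
      next
        case (snoc v x)
        have x: "x \<in> {1..n}" using True snoc by auto
        have "0 = star D (- Xi n) w" using D(3) by simp
        also have "\<dots> = (\<Sum>j<length v. - D (take j w @ [w ! j]) * (- Xi n) (drop j w))
                       + (- D (take (length v) w @ [w ! length v]) * (- Xi n) (drop (length v) w))"
          by (simp add: star_def snoc)
        also have "(\<Sum>j<length v. - D (take j w @ [w ! j]) * (- Xi n) (drop j w)) = 0"
        proof (rule sum.neutral, intro ballI)
          fix j assume j: "j \<in> {..<length v}"
          have "take j w @ [w ! j] = take (Suc j) w"
            using j snoc by (simp add: take_Suc_conv_app_nth nth_append)
          moreover have "D (take (Suc j) w) = 0"
            using 1 j snoc by simp
          ultimately show "- D (take j w @ [w ! j]) * (- Xi n) (drop j w) = 0" by simp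
        qed
        also have "- D (take (length v) w @ [w ! length v]) * (- Xi n) (drop (length v) w) = D w"
          using snoc x by (simp add: Xi_single)
        finally show ?thesis by simp
      qed
    qed
  qed
qed

lemma star_inv_eq: "star_inv n (- Xi n) = RR n - WW n"
  unfolding star_inv_def
proof (rule the_equality)
  show "in_T n (RR n - WW n) \<and> (RR n - WW n) [] = 0 \<and> star (RR n - WW n) (- Xi n) = x0 n
        \<and> star (- Xi n) (RR n - WW n) = x0 n"
    by (simp add: in_T_diff in_T_RR in_T_WW RR_Nil WW_Nil ZY YZ)
next
  fix Z assume Z: "in_T n Z \<and> Z [] = 0 \<and> star Z (- Xi n) = x0 n \<and> star (- Xi n) Z = x0 n"
  have "Z - (RR n - WW n) = 0"
  proof (rule left_inv_unique)
    show "in_T n (Z - (RR n - WW n))" using Z by (simp add: in_T_diff in_T_RR in_T_WW)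
    show "(Z - (RR n - WW n)) [] = 0" using Z by (simp add: RR_Nil WW_Nil)
    have "star (Z - (RR n - WW n)) (- Xi n) = star Z (- Xi n) - star (RR n - WW n) (- Xi n)"
      by (rule star_diff_left)
    then show "star (Z - (RR n - WW n)) (- Xi n) = 0" using Z by (simp only: ZY) simp
  qed
  then show "Z = RR n - WW n" by simp
qed

lemma tsubst_q: "tsubst q_coeff (gen k) = hom (gen k) (Sf * fps_X ^ 2) - gen k"
proof -
  have "fps_nth Qf = q_coeff" by (rule ext) (simp add: Qf_def)
  then have "tsubst q_coeff (gen k) = hom (gen k) Qf" by (simp add: hom_def)
  then show ?thesis by (simp add: Qf_Sf hom_diff hom_X)
qed

theorem theorem3p1:
  fixes n :: nat
  assumes "n \<ge> 1"
  shows "star_inv n (- Xi n) + tmul (tmul (x0 n) (tsubst s_coeff (Xi n))) (x0 n)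
           = x0 n - (\<Sum>k\<in>{1..n}. \<Sum>l\<in>{1..<k}. tmul (gen k) (gen l))
               + (\<Sum>k\<in>{1..n}. tmul (tsubst s_coeff (gen k)) (tpow (gen k) 2))
       \<and> x0 n - (\<Sum>k\<in>{1..n}. \<Sum>l\<in>{1..<k}. tmul (gen k) (gen l))
               + (\<Sum>k\<in>{1..n}. tmul (tsubst s_coeff (gen k)) (tpow (gen k) 2))
           = - (\<Sum>k\<in>{1..n}. \<Sum>l\<in>{1..<k}. tmul (gen k) (gen l))
               + (\<Sum>k\<in>{1..n}. tsubst q_coeff (gen k))"
proof
  have "star_inv n (- Xi n) + tmul (tmul (x0 n) (tsubst s_coeff (Xi n))) (x0 n) = RR n"
    by (simp add: star_inv_eq WW_def SXi_def)
  then show "star_inv n (- Xi n) + tmul (tmul (x0 n) (tsubst s_coeff (Xi n))) (x0 n)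
           = x0 n - (\<Sum>k\<in>{1..n}. \<Sum>l\<in>{1..<k}. tmul (gen k) (gen l))
               + (\<Sum>k\<in>{1..n}. tmul (tsubst s_coeff (gen k)) (tpow (gen k) 2))"
    by (simp only: RR_def SS_def SQ_def)
next
  have "(\<Sum>k\<in>{1..n}. tsubst q_coeff (gen k)) = SQ n + x0 n"
    by (simp add: tsubst_q sum_subtractf SQ_eq x0_def)
  then show "x0 n - (\<Sum>k\<in>{1..n}. \<Sum>l\<in>{1..<k}. tmul (gen k) (gen l))
               + (\<Sum>k\<in>{1..n}. tmul (tsubst s_coeff (gen k)) (tpow (gen k) 2))
           = - (\<Sum>k\<in>{1..n}. \<Sum>l\<in>{1..<k}. tmul (gen k) (gen l))
               + (\<Sum>k\<in>{1..n}. tsubst q_coeff (gen k))"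
    by (simp only: SQ_def) simp
qed

end
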